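(* Let $W$ be the Witt algebra with basis $\{x_n\mid n\in\mathbb{Z}\}$ and bracket $[x_m,x_n]=(n-m)x_{m+n}$, and let $V$ be a left-symmetric algebra structure on the underlying space of $W$ with product $x_mx_n=f(m,n)x_{m+n}$ for some $f:\mathbb{Z}\times\mathbb{Z}\to\mathbb{C}$ and with $x_mx_n-x_nx_m=(n-m)x_{m+n}$. Regard $V$ as a $W$-module via left multiplication. Then for no $\alpha\in\mathbb{C}$ is $V$ isomorphic as a $W$-module to $A_\alpha$, the $W$-module with basis $\{v_n\mid n\in\mathbb{Z}\}$ and action $x_iv_n=(n+i)v_{n+i}$ for $n\neq0$, $x_iv_0=i(\alpha+i)v_i$.
   Context: A left-symmetric algebra is a vector space with bilinear product satisfying $(xy)z-x(yz)=(yx)z-y(xz)$; left multiplication then gives a representation of the commutator Lie algebra. *)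

theory Defs
  imports Complex_Main
begin

text \<open>Vectors of a complex vector space with basis indexed by the integers are
  represented as finitely supported functions int \<Rightarrow> complex
  (coefficient of the n-th basis vector).\<close>

definition fin_supp :: "(int \<Rightarrow> complex) set" where
  "fin_supp = {v. finite {n. v n \<noteq> 0}}"

text \<open>The product x_m x_n = f(m,n) x_{m+n} is a left-symmetric algebra structure
  (bilinearity reduces the identity to basis elements).\<close>
definition left_symmetric_coeffs :: "(int \<Rightarrow> int \<Rightarrow> complex) \<Rightarrow> bool" where
  "left_symmetric_coeffs f \<longleftrightarrow>
     (\<forall>a b c. f a b * f (a + b) c - f b c * f a (b + c)
             = f b a * f (b + a) c - f a c * f b (a + c))"

definition witt_commutator :: "(int \<Rightarrow> int \<Rightarrow> complex) \<Rightarrow> bool" where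
  "witt_commutator f \<longleftrightarrow> (\<forall>m n. f m n - f n m = of_int (n - m))"

text \<open>Left multiplication by x_i on V: x_i (\<Sum> v_k x_k) = \<Sum> v_k f(i,k) x_{i+k}.\<close>
definition lmult :: "(int \<Rightarrow> int \<Rightarrow> complex) \<Rightarrow> int \<Rightarrow> (int \<Rightarrow> complex) \<Rightarrow> (int \<Rightarrow> complex)" where
  "lmult f i v = (\<lambda>k. f i (k - i) * v (k - i))"

text \<open>Coefficient of the action of W on A_alpha: x_i v_n = c(i,n) v_{n+i}.\<close>
definition A_coeff :: "complex \<Rightarrow> int \<Rightarrow> int \<Rightarrow> complex" where
  "A_coeff \<alpha> i n = (if n \<noteq> 0 then of_int (n + i) else of_int i * (\<alpha> + of_int i))"

definition A_act :: "complex \<Rightarrow> int \<Rightarrow> (int \<Rightarrow> complex) \<Rightarrow> (int \<Rightarrow> complex)" where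
  "A_act \<alpha> i v = (\<lambda>k. A_coeff \<alpha> i (k - i) * v (k - i))"

text \<open>A W-module isomorphism between two modules on the space fin_supp, given by the
  actions of basis elements x_i (which determine the action of all of W by linearity).\<close>
definition W_module_iso ::
  "(int \<Rightarrow> (int \<Rightarrow> complex) \<Rightarrow> (int \<Rightarrow> complex)) \<Rightarrow> (int \<Rightarrow> (int \<Rightarrow> complex) \<Rightarrow> (int \<Rightarrow> complex))
   \<Rightarrow> ((int \<Rightarrow> complex) \<Rightarrow> (int \<Rightarrow> complex)) \<Rightarrow> bool" where
  "W_module_iso act1 act2 \<phi> \<longleftrightarrow>
     bij_betw \<phi> fin_supp fin_supp
   \<and> (\<forall>u\<in>fin_supp. \<forall>v\<in>fin_supp. \<phi> (\<lambda>k. u k + v k) = (\<lambda>k. \<phi> u k + \<phi> v k))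
   \<and> (\<forall>c. \<forall>v\<in>fin_supp. \<phi> (\<lambda>k. c * v k) = (\<lambda>k. c * \<phi> v k))
   \<and> (\<forall>i. \<forall>v\<in>fin_supp. \<phi> (act1 i v) = act2 i (\<phi> v))"

end

theory Submission
  imports Defs
begin

definition dl :: "int \<Rightarrow> int \<Rightarrow> complex" where "dl n = (\<lambda>k. if k = n then 1 else 0)"

lemma dl_fs: "dl n \<in> fin_supp"
proof -
  have "{k. dl n k \<noteq> 0} = {n}" by (auto simp: dl_def)
  then show ?thesis unfolding fin_supp_def by simp
qed

lemma scal_fs: "v \<in> fin_supp \<Longrightarrow> (\<lambda>k. c * v k) \<in> fin_supp"
  unfolding fin_supp_def by (auto elim: finite_subset[rotated])

lemma lmult_dl: "lmult f i (dl n) = (\<lambda>k. f i n * dl (n+i) k)"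
  unfolding lmult_def dl_def by (auto simp: fun_eq_iff)

theorem theorem3p6:
  fixes f :: "int \<Rightarrow> int \<Rightarrow> complex"
  assumes "left_symmetric_coeffs f"
    and "witt_commutator f"
  shows "\<not> (\<exists>\<alpha> \<phi>. W_module_iso (lmult f) (A_act \<alpha>) \<phi>)"
proof
  assume "\<exists>\<alpha> \<phi>. W_module_iso (lmult f) (A_act \<alpha>) \<phi>"
  then obtain \<alpha> \<phi> where bij: "bij_betw \<phi> fin_supp fin_supp"
    and sc: "\<And>c v. v \<in> fin_supp \<Longrightarrow> \<phi> (\<lambda>k. c * v k) = (\<lambda>k. c * \<phi> v k)"
    and it: "\<And>i v. v \<in> fin_supp \<Longrightarrow> \<phi> (lmult f i v) = A_act \<alpha> i (\<phi> v)"
    unfolding W_module_iso_def by blast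
  have inj: "\<And>u v. u \<in> fin_supp \<Longrightarrow> v \<in> fin_supp \<Longrightarrow> \<phi> u = \<phi> v \<Longrightarrow> u = v"
    using bij unfolding bij_betw_def inj_on_def by blast
  define w where "w n = \<phi> (dl n)" for n
  have K: "f i n * w (n+i) p = A_coeff \<alpha> i (p - i) * w n (p - i)" for i n p
  proof -
    have "\<phi> (lmult f i (dl n)) = A_act \<alpha> i (w n)" using it dl_fs w_def by simp
    moreover have "\<phi> (lmult f i (dl n)) = (\<lambda>k. f i n * w (n+i) k)"
      by (simp add: lmult_dl sc[OF dl_fs] w_def)
    ultimately have "(\<lambda>k. f i n * w (n+i) k) = A_act \<alpha> i (w n)" by simp
    from fun_cong[OF this, of p] show ?thesis unfolding A_act_def by simp
  qed
  have wnz: "\<exists>s. w n s \<noteq> 0" for n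
  proof (rule ccontr)
    assume "\<not> ?thesis"
    then have w0: "w n = (\<lambda>k. 0)" by auto
    have "\<phi> (\<lambda>k. 0 * dl n k) = (\<lambda>k. 0 * \<phi> (dl n) k)" using sc[OF dl_fs] by blast
    then have z: "\<phi> (\<lambda>k. 0) = (\<lambda>k. 0)" by simp
    have "(\<lambda>k::int. 0::complex) \<in> fin_supp" using scal_fs[OF dl_fs, of 0 n] by simp
    then have "dl n = (\<lambda>k. 0)" using inj[OF dl_fs] z w0 w_def by metis
    then have "dl n n = 0" by simp
    then show False by (simp add: dl_def)
  qed
  have supp: "k = k'" if "w n k \<noteq> 0" "w n k' \<noteq> 0" for n k k'
  proof -
    have "f 0 n * w n p = of_int p * w n p" for p
      using K[of 0 n p] by (cases "p = 0") (simp_all add: A_coeff_def)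
    then have "f 0 n = of_int k" "f 0 n = of_int k'" using that by auto
    then show ?thesis by simp
  qed
  obtain \<sigma> where \<sigma>: "\<forall>n. w n (\<sigma> n) \<noteq> 0" using wnz by metis
  have w\<sigma>: "w n k \<noteq> 0 \<longleftrightarrow> k = \<sigma> n" for n k using supp \<sigma> by blast
  have winj: "n = n'" if "\<sigma> n = \<sigma> n'" for n n'
  proof (rule ccontr)
    assume nn: "n \<noteq> n'"
    define c where "c = w n (\<sigma> n)"
    define c' where "c' = w n' (\<sigma> n')"
    have e: "(\<lambda>k. c' * w n k) = (\<lambda>k. c * w n' k)"
    proof
      fix k show "c' * w n k = c * w n' k"
      proof (cases "k = \<sigma> n")
        case True then show ?thesis using that by (simp add: c_def c'_def)
      next
        case False then show ?thesis using that w\<sigma> by (metis mult_zero_right)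
      qed
    qed
    have "\<phi> (\<lambda>k. c' * dl n k) = \<phi> (\<lambda>k. c * dl n' k)"
      using e by (simp add: sc[OF dl_fs] w_def)
    then have "(\<lambda>k. c' * dl n k) = (\<lambda>k. c * dl n' k)"
      using inj scal_fs dl_fs by blast
    from fun_cong[OF this, of n] nn have "c' = 0" by (simp add: dl_def)
    then show False using \<sigma> c'_def by simp
  qed
  have L: "\<sigma> (n+i) = \<sigma> n + i" if "A_coeff \<alpha> i (\<sigma> n) \<noteq> 0" for n i
  proof -
    have "f i n * w (n+i) (\<sigma> n + i) = A_coeff \<alpha> i (\<sigma> n) * w n (\<sigma> n)"
      using K[of i n "\<sigma> n + i"] by simp
    also have "\<dots> \<noteq> 0" using that \<sigma> by simp
    finally have "w (n+i) (\<sigma> n + i) \<noteq> 0" by auto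
    then show ?thesis using w\<sigma> by metis
  qed
  obtain n1 where n1: "\<sigma> n1 \<noteq> 0" using winj[of 0 1] by (cases "\<sigma> 0 = 0") auto
  define z where "z = n1 - \<sigma> n1"
  have sz: "\<sigma> z = 0"
  proof (rule ccontr)
    assume t: "\<sigma> z \<noteq> 0"
    define i where "i = \<sigma> z - \<sigma> n1"
    have "A_coeff \<alpha> i (\<sigma> n1) = of_int (\<sigma> z)" using n1 by (simp add: A_coeff_def i_def)
    then have "\<sigma> (n1 + i) = \<sigma> z" using L[of i n1] t by (simp add: i_def)
    then have "n1 + i = z" using winj by blast
    then show False using t by (simp add: i_def z_def)
  qed
  define n where "n = \<bar>z\<bar> + 1"
  define m where "m = z - n"
  have mn: "m \<noteq> 0" "n \<noteq> 0" "m \<noteq> n" "n + m = z" "m + n = z"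
    unfolding m_def n_def by auto
  have wz: "w z 0 \<noteq> 0" using w\<sigma> sz by simp
  have "f m n * w (n+m) 0 = A_coeff \<alpha> m (-m) * w n (-m)" using K[of m n 0] by simp
  then have f1: "f m n = 0" using mn wz by (simp add: A_coeff_def)
  have "f n m * w (m+n) 0 = A_coeff \<alpha> n (-n) * w m (-n)" using K[of n m 0] by simp
  then have f2: "f n m = 0" using mn wz by (simp add: A_coeff_def)
  have "f m n - f n m = of_int (n - m)" using assms(2) unfolding witt_commutator_def by blast
  then show False using f1 f2 mn by simp
qed

end
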